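(* Let $R$ be a commutative ring in which $2$ is invertible, $I$ an ideal of $R$, let $M$ be a quadratic $R$-space, and let $\alpha\in\mathrm{TransO}(M,IM,\langle\,,\,\rangle)$. Then there exists $\beta(X)\in\mathrm{TransO}(M[X],IM[X],\langle\,,\,\rangle)$ such that $\beta(1)=\alpha$ and $\beta(0)=\mathrm{Id}$.
   Context: A quadratic space is a finitely generated projective module $M$ with quadratic form $q$ whose bilinear form $\langle x,y\rangle=q(x+y)-q(x)-q(y)$ is non-degenerate. $M[X]=M\otimes_RR[X]$ is the quadratic space over $R[X]$ obtained by extension of scalars, $IM[X]=I[X]M[X]$, and $\beta(c)$ for $c\in R$ is the specialization $X\mapsto c$. ESD transvections on a quadratic space $N$ over a ring $S$: for $u,v\in N$ with $u$ unimodular, $q(u)=0$, $\langle u,v\rangle=0$, $r=q(v)$, $\sigma_{u,v}(x)=x+\langle v,x\rangle u-\langle u,x\rangle v-r\langle u,x\rangle u$; $\mathrm{TransO}(N)$ is generated by all of them, and for an ideal $J$ of $S$, $\mathrm{TransO}(N,JN)$ is the normal closure in $\mathrm{TransO}(N)$ of the subgroup generated by the $\sigma_{u,v}$ with $v\in JN$. *)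

theory Defs
  imports "HOL-Computational_Algebra.Polynomial"
begin

(* Modules over a commutative ring R = 'a are given by a type 'm :: ab_group_add
   together with a scalar multiplication s satisfying the HOL locale `module s`. *)

definition ring_ideal :: "'a::comm_ring_1 set \<Rightarrow> bool" where
  "ring_ideal I \<longleftrightarrow> 0 \<in> I \<and> (\<forall>x\<in>I. \<forall>y\<in>I. x + y \<in> I) \<and> (\<forall>r. \<forall>x\<in>I. r * x \<in> I)"

definition lin_functional :: "('a::comm_ring_1 \<Rightarrow> 'm::ab_group_add \<Rightarrow> 'm) \<Rightarrow> ('m \<Rightarrow> 'a) \<Rightarrow> bool" where
  "lin_functional s \<phi> \<longleftrightarrow> (\<forall>x y. \<phi> (x + y) = \<phi> x + \<phi> y) \<and> (\<forall>a x. \<phi> (s a x) = a * \<phi> x)"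

(* finitely generated projective: a retract (direct summand) of a free module R^n,
   where R^n is modelled as functions nat => R vanishing outside {..<n} *)
definition fg_projective :: "('a::comm_ring_1 \<Rightarrow> 'm::ab_group_add \<Rightarrow> 'm) \<Rightarrow> bool" where
  "fg_projective s \<longleftrightarrow> (\<exists>(n::nat) (f :: 'm \<Rightarrow> nat \<Rightarrow> 'a) (g :: (nat \<Rightarrow> 'a) \<Rightarrow> 'm).
      (\<forall>x i. n \<le> i \<longrightarrow> f x i = 0) \<and>
      (\<forall>x y. f (x + y) = (\<lambda>i. f x i + f y i)) \<and> (\<forall>a x. f (s a x) = (\<lambda>i. a * f x i)) \<and>
      (\<forall>v w. g (\<lambda>i. v i + w i) = g v + g w) \<and> (\<forall>a v. g (\<lambda>i. a * v i) = s a (g v)) \<and>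
      (\<forall>x. g (f x) = x))"

definition bil :: "('m::ab_group_add \<Rightarrow> 'a::comm_ring_1) \<Rightarrow> 'm \<Rightarrow> 'm \<Rightarrow> 'a" where
  "bil q x y = q (x + y) - q x - q y"

(* quadratic space: f.g. projective module, quadratic form whose polar form is bilinear
   and non-degenerate (x |-> <x,-> is a bijection M -> Hom_R(M,R)) *)
definition quadratic_space :: "('a::comm_ring_1 \<Rightarrow> 'm::ab_group_add \<Rightarrow> 'm) \<Rightarrow> ('m \<Rightarrow> 'a) \<Rightarrow> bool" where
  "quadratic_space s q \<longleftrightarrow> module s \<and> fg_projective s \<and>
     (\<forall>a x. q (s a x) = a * a * q x) \<and>
     (\<forall>x. lin_functional s (bil q x)) \<and> (\<forall>y. lin_functional s (\<lambda>x. bil q x y)) \<and>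
     bij_betw (bil q) UNIV {\<phi>. lin_functional s \<phi>}"

definition unimodular :: "('a::comm_ring_1 \<Rightarrow> 'm::ab_group_add \<Rightarrow> 'm) \<Rightarrow> 'm \<Rightarrow> bool" where
  "unimodular s u \<longleftrightarrow> (\<exists>\<phi>. lin_functional s \<phi> \<and> \<phi> u = 1)"

definition esd_pair :: "('a::comm_ring_1 \<Rightarrow> 'm::ab_group_add \<Rightarrow> 'm) \<Rightarrow> ('m \<Rightarrow> 'a) \<Rightarrow> 'm \<Rightarrow> 'm \<Rightarrow> bool" where
  "esd_pair s q u v \<longleftrightarrow> unimodular s u \<and> q u = 0 \<and> bil q u v = 0"

definition esd :: "('a::comm_ring_1 \<Rightarrow> 'm::ab_group_add \<Rightarrow> 'm) \<Rightarrow> ('m \<Rightarrow> 'a) \<Rightarrow> 'm \<Rightarrow> 'm \<Rightarrow> 'm \<Rightarrow> 'm" where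
  "esd s q u v = (\<lambda>x. x + s (bil q v x) u - s (bil q u x) v - s (q v * bil q u x) u)"

inductive_set TransO :: "('a::comm_ring_1 \<Rightarrow> 'm::ab_group_add \<Rightarrow> 'm) \<Rightarrow> ('m \<Rightarrow> 'a) \<Rightarrow> ('m \<Rightarrow> 'm) set"
  for s q where
  TransO_id: "id \<in> TransO s q"
| TransO_gen: "esd_pair s q u v \<Longrightarrow> esd s q u v \<in> TransO s q"
| TransO_comp: "f \<in> TransO s q \<Longrightarrow> g \<in> TransO s q \<Longrightarrow> f \<circ> g \<in> TransO s q"
| TransO_inv: "f \<in> TransO s q \<Longrightarrow> inv f \<in> TransO s q"

inductive_set ideal_submod :: "('a::comm_ring_1 \<Rightarrow> 'm::ab_group_add \<Rightarrow> 'm) \<Rightarrow> 'a set \<Rightarrow> 'm set"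
  for s J where
  ideal_submod_zero: "0 \<in> ideal_submod s J"
| ideal_submod_smult: "a \<in> J \<Longrightarrow> s a x \<in> ideal_submod s J"
| ideal_submod_add: "x \<in> ideal_submod s J \<Longrightarrow> y \<in> ideal_submod s J \<Longrightarrow> x + y \<in> ideal_submod s J"

(* TransO(N, JN): normal closure in TransO(N) of the subgroup generated by
   the sigma_{u,v} with v in JN *)
inductive_set TransO_rel :: "('a::comm_ring_1 \<Rightarrow> 'm::ab_group_add \<Rightarrow> 'm) \<Rightarrow> ('m \<Rightarrow> 'a) \<Rightarrow> 'a set \<Rightarrow> ('m \<Rightarrow> 'm) set"
  for s q J where
  TransO_rel_id: "id \<in> TransO_rel s q J"
| TransO_rel_gen: "esd_pair s q u v \<Longrightarrow> v \<in> ideal_submod s J \<Longrightarrow> esd s q u v \<in> TransO_rel s q J"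
| TransO_rel_conj: "\<tau> \<in> TransO s q \<Longrightarrow> f \<in> TransO_rel s q J \<Longrightarrow> \<tau> \<circ> f \<circ> inv \<tau> \<in> TransO_rel s q J"
| TransO_rel_comp: "f \<in> TransO_rel s q J \<Longrightarrow> g \<in> TransO_rel s q J \<Longrightarrow> f \<circ> g \<in> TransO_rel s q J"
| TransO_rel_inv: "f \<in> TransO_rel s q J \<Longrightarrow> inv f \<in> TransO_rel s q J"

(* Extension of scalars: M[X] = M (x) R[X] is modelled as polynomials with coefficients in M *)
definition scaleX :: "('a::comm_ring_1 \<Rightarrow> 'm::ab_group_add \<Rightarrow> 'm) \<Rightarrow> 'a poly \<Rightarrow> 'm poly \<Rightarrow> 'm poly" where
  "scaleX s p m = (\<Sum>i\<le>degree p. \<Sum>j\<le>degree m. monom (s (coeff p i) (coeff m j)) (i + j))"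

definition qX :: "('m::ab_group_add \<Rightarrow> 'a::comm_ring_1) \<Rightarrow> 'm poly \<Rightarrow> 'a poly" where
  "qX q m = (\<Sum>i\<le>degree m. monom (q (coeff m i)) (2 * i)) +
            (\<Sum>i\<le>degree m. \<Sum>j\<le>degree m. if i < j then monom (bil q (coeff m i) (coeff m j)) (i + j) else 0)"

definition ideal_poly :: "'a::comm_ring_1 set \<Rightarrow> 'a poly set" where
  "ideal_poly I = {p. \<forall>i. coeff p i \<in> I}"

definition evalM :: "('a::comm_ring_1 \<Rightarrow> 'm::ab_group_add \<Rightarrow> 'm) \<Rightarrow> 'a \<Rightarrow> 'm poly \<Rightarrow> 'm" where
  "evalM s c m = (\<Sum>i\<le>degree m. s (c ^ i) (coeff m i))"

definition specialize :: "('a::comm_ring_1 \<Rightarrow> 'm::ab_group_add \<Rightarrow> 'm) \<Rightarrow> 'a \<Rightarrow> ('m poly \<Rightarrow> 'm poly) \<Rightarrow> 'm \<Rightarrow> 'm" where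
  "specialize s c \<beta> = (\<lambda>x. evalM s c (\<beta> [:x:]))"

end

theory Submission
  imports Defs
begin

lemma conv_sum:
  fixes b :: "nat \<Rightarrow> nat \<Rightarrow> 'g::comm_monoid_add"
  assumes z1: "\<And>i j. d1 < i \<Longrightarrow> b i j = 0" and z2: "\<And>i j. d2 < j \<Longrightarrow> b i j = 0"
  shows "(\<Sum>i\<le>d1. \<Sum>j\<le>d2. if i + j = n then b i j else 0) = (\<Sum>i\<le>n. b i (n - i))"
proof -
  have "(\<Sum>i\<le>d1. \<Sum>j\<le>d2. if i + j = n then b i j else 0) = (\<Sum>i\<le>d1. if i \<le> n then b i (n - i) else 0)"
  proof (rule sum.cong[OF refl])
    fix i assume "i \<in> {..d1}"
    have "(\<Sum>j\<le>d2. if i + j = n then b i j else 0) = (\<Sum>j\<le>d2. if j = n - i then (if i \<le> n then b i j else 0) else 0)"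
      by (rule sum.cong) auto
    also have "\<dots> = (if n - i \<le> d2 then (if i \<le> n then b i (n - i) else 0) else 0)"
      by (simp add: sum.delta)
    also have "\<dots> = (if i \<le> n then b i (n - i) else 0)" using z2 by auto
    finally show "(\<Sum>j\<le>d2. if i + j = n then b i j else 0) = (if i \<le> n then b i (n - i) else 0)" .
  qed
  also have "\<dots> = (\<Sum>i\<le>max d1 n. if i \<le> n then b i (n - i) else 0)"
    by (rule sum.mono_neutral_left) (auto simp: z1)
  also have "\<dots> = (\<Sum>i\<le>n. b i (n - i))"
    by (rule sum.mono_neutral_cong_right) (auto)
  finally show ?thesis .
qed

definition shc :: "'z::zero poly \<Rightarrow> nat \<Rightarrow> nat \<Rightarrow> 'z" where
  "shc p j n = (if j \<le> n then coeff p (n - j) else 0)"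

locale qsp = module s for s :: "'a::comm_ring_1 \<Rightarrow> 'm::ab_group_add \<Rightarrow> 'm" +
  fixes q :: "'m \<Rightarrow> 'a" and h :: 'a
  assumes qhom: "q (s a x) = a*a*q x"
  and linl: "lin_functional s (bil q x)"
  and linr: "lin_functional s (\<lambda>x. bil q x y)"
  and two: "2*h = 1"
begin

lemma bil_add2: "bil q x (y+z) = bil q x y + bil q x z"
  using linl[of x] unfolding lin_functional_def by blast
lemma bil_smul2: "bil q x (s a y) = a * bil q x y"
  using linl[of x] unfolding lin_functional_def by blast
lemma bil_add1: "bil q (y+z) x = bil q y x + bil q z x"
  using linr[of x] unfolding lin_functional_def by blast
lemma bil_smul1: "bil q (s a y) x = a * bil q y x"
  using linr[of x] unfolding lin_functional_def by blast
lemma bil_sym: "bil q x y = bil q y x"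
  unfolding bil_def by (simp add: add.commute)
lemma bil_zero2[simp]: "bil q x 0 = 0"
  using bil_smul2[of x 0 0] by simp
lemma bil_zero1[simp]: "bil q 0 x = 0"
  using bil_smul1[of 0 0 x] by simp
lemma bil_minus2: "bil q x (- y) = - bil q x y"
  using bil_smul2[of x "-1" y] by simp
lemma bil_minus1: "bil q (- y) x = - bil q y x"
  using bil_smul1[of "-1" y x] by simp
lemma bil_diff2: "bil q x (y - z) = bil q x y - bil q x z"
  using bil_add2[of x y "-z"] by (simp add: bil_minus2)
lemma bil_diff1: "bil q (y - z) x = bil q y x - bil q z x"
  using bil_add1[of y "-z" x] by (simp add: bil_minus1)
lemma q0[simp]: "q 0 = 0"
  using qhom[of 0 0] by simp
lemma q_minus: "q (- x) = q x"
  using qhom[of "-1" x] by simp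
lemma bil_self: "bil q x x = 2 * q x"
proof -
  have "x + x = s 2 x" using scale_left_distrib[of 1 1 x] by simp
  then have "q (x + x) = 4 * q x" using qhom[of 2 x] by simp
  then show ?thesis unfolding bil_def by simp
qed
lemma bil_sum2: "bil q x (sum f A) = (\<Sum>i\<in>A. bil q x (f i))"
  by (induct A rule: infinite_finite_induct) (auto simp: bil_add2)
lemma bil_sum1: "bil q (sum f A) x = (\<Sum>i\<in>A. bil q (f i) x)"
  by (induct A rule: infinite_finite_induct) (auto simp: bil_add1)


lemma coeff_scaleX: "coeff (scaleX s a m) n = (\<Sum>i\<le>n. s (coeff a i) (coeff m (n - i)))"
proof -
  have "coeff (scaleX s a m) n = (\<Sum>i\<le>degree a. \<Sum>j\<le>degree m. if i + j = n then s (coeff a i) (coeff m j) else 0)"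
    unfolding scaleX_def by (simp add: coeff_sum coeff_monom)
  also have "\<dots> = (\<Sum>i\<le>n. s (coeff a i) (coeff m (n - i)))"
    by (rule conv_sum) (auto simp: coeff_eq_0)
  finally show ?thesis .
qed

lemma sum_rev_le: "(\<Sum>i\<le>n. f i (n - i)) = (\<Sum>i\<le>(n::nat). f (n - i) i)"
  by (rule sum.reindex_bij_witness[where i="\<lambda>i. n - i" and j="\<lambda>i. n - i"]) auto

lemma coeff_qX2: "2 * coeff (qX q m) n = (\<Sum>i\<le>n. bil q (coeff m i) (coeff m (n - i)))"
proof -
  let ?d = "degree m" and ?c = "coeff m"
  let ?B = "\<lambda>i j. bil q (?c i) (?c j)"
  have cq: "coeff (qX q m) n = (\<Sum>i\<le>?d. if 2 * i = n then q (?c i) else 0)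
      + (\<Sum>i\<le>?d. \<Sum>j\<le>?d. if i < j \<and> i + j = n then ?B i j else 0)"
    unfolding qX_def by (simp add: coeff_sum coeff_monom if_distrib[of "\<lambda>x. coeff x n"] conj_commute cong: if_cong)
      (intro sum.cong refl, auto)
  have T: "(\<Sum>i\<le>n. ?B i (n - i)) = (\<Sum>i\<le>?d. \<Sum>j\<le>?d. if i + j = n then ?B i j else 0)"
    by (rule conv_sum[symmetric]) (auto simp: coeff_eq_0)
  have split: "\<And>i j. (if i + j = n then ?B i j else 0) = (if i < j \<and> i + j = n then ?B i j else 0)
      + (if i = j \<and> i + j = n then ?B i j else 0) + (if j < i \<and> i + j = n then ?B i j else 0)"
    by auto
  have mid: "(\<Sum>i\<le>?d. \<Sum>j\<le>?d. if i = j \<and> i + j = n then ?B i j else 0) = 2 * (\<Sum>i\<le>?d. if 2 * i = n then q (?c i) else 0)"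
  proof -
    have "(\<Sum>i\<le>?d. \<Sum>j\<le>?d. if i = j \<and> i + j = n then ?B i j else 0) = (\<Sum>i\<le>?d. \<Sum>j\<le>?d. if j = i then (if 2 * i = n then ?B i i else 0) else 0)"
      by (intro sum.cong refl) auto
    also have "\<dots> = (\<Sum>i\<le>?d. if 2 * i = n then 2 * q (?c i) else 0)"
      by simp (intro sum.cong refl, use bil_self in auto)
    finally show ?thesis by (simp add: sum_distrib_left if_distrib cong: if_cong)
  qed
  have lst: "(\<Sum>i\<le>?d. \<Sum>j\<le>?d. if j < i \<and> i + j = n then ?B i j else 0) = (\<Sum>i\<le>?d. \<Sum>j\<le>?d. if i < j \<and> i + j = n then ?B i j else 0)"
    by (subst sum.swap) (intro sum.cong refl, auto simp: bil_sym add.commute)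
  show ?thesis unfolding T cq
    by (simp add: split sum.distrib mid lst algebra_simps)
qed

lemma coeff_h: "coeff (p :: 'a poly) n = h * (2 * coeff p n)"
  using two by (simp add: mult.assoc[symmetric] mult.commute)

lemma coeff_bil_qX: "coeff (bil (qX q) m p) n = (\<Sum>i\<le>n. bil q (coeff m i) (coeff p (n - i)))"
proof -
  have "2 * coeff (bil (qX q) m p) n = 2 * coeff (qX q (m + p)) n - 2 * coeff (qX q m) n - 2 * coeff (qX q p) n"
    unfolding bil_def by (simp add: algebra_simps)
  also have "\<dots> = (\<Sum>i\<le>n. bil q (coeff m i) (coeff p (n - i))) + (\<Sum>i\<le>n. bil q (coeff p i) (coeff m (n - i)))"
    unfolding coeff_qX2 by (simp add: bil_add1 bil_add2 sum.distrib algebra_simps)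
  also have "(\<Sum>i\<le>n. bil q (coeff p i) (coeff m (n - i))) = (\<Sum>i\<le>n. bil q (coeff m i) (coeff p (n - i)))"
    by (subst sum_rev_le) (simp add: bil_sym)
  finally have "2 * coeff (bil (qX q) m p) n = 2 * (\<Sum>i\<le>n. bil q (coeff m i) (coeff p (n - i)))" by simp
  then show ?thesis using coeff_h[of "bil (qX q) m p" n] two
    by (metis mult.assoc mult.commute mult_1)
qed


lemma coeff_pCons0_eq: "coeff [:u:] i = (if i = 0 then u else 0)"
  by (cases i) auto

lemma c1: "coeff (bil (qX q) [:u:] p) n = bil q u (coeff p n)"
proof -
  have "coeff (bil (qX q) [:u:] p) n = (\<Sum>i\<le>n. if i = 0 then bil q u (coeff p (n - i)) else 0)"
    unfolding coeff_bil_qX by (intro sum.cong refl) (simp add: coeff_pCons0_eq)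
  then show ?thesis by simp
qed

lemma c2: "coeff (bil (qX q) (monom v k) p) n = bil q v (shc p k n)"
proof -
  have "coeff (bil (qX q) (monom v k) p) n = (\<Sum>i\<le>n. if i = k then bil q v (coeff p (n - i)) else 0)"
    unfolding coeff_bil_qX by (intro sum.cong refl) (simp add: coeff_monom)
  then show ?thesis by (simp add: shc_def)
qed

lemma c3: "qX q (monom v k) = monom (q v) (2 * k)"
proof (rule poly_eqI)
  fix n
  have "2 * coeff (qX q (monom v k)) n = (\<Sum>i\<le>n. if i = k then (if n = 2 * k then bil q v v else 0) else 0)"
    unfolding coeff_qX2 by (intro sum.cong refl) (auto simp: coeff_monom)
  also have "\<dots> = 2 * coeff (monom (q v) (2 * k)) n"
    by (auto simp: coeff_monom bil_self)
  finally show "coeff (qX q (monom v k)) n = coeff (monom (q v) (2 * k)) n"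
    by (metis coeff_h)
qed

lemma c4: "coeff (scaleX s a [:u:]) n = s (coeff a n) u"
proof -
  have "coeff (scaleX s a [:u:]) n = (\<Sum>i\<le>n. if i = n then s (coeff a i) u else 0)"
    unfolding coeff_scaleX by (intro sum.cong refl) (auto simp: coeff_pCons0_eq)
  then show ?thesis by simp
qed

lemma c5: "coeff (scaleX s a (monom v k)) n = s (shc a k n) v"
proof -
  have "coeff (scaleX s a (monom v k)) n = (\<Sum>i\<le>n. if i = n - k then (if k \<le> n then s (coeff a i) v else 0) else 0)"
    unfolding coeff_scaleX by (intro sum.cong refl) (auto simp: coeff_monom)
  then show ?thesis by (simp add: shc_def)
qed

lemma c6: "q u = 0 \<Longrightarrow> qX q [:u:] = 0"
  using c3[of u 0] by (simp add: monom_0)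

definition T :: "'m \<Rightarrow> 'm \<Rightarrow> 'm \<Rightarrow> 'm \<Rightarrow> 'm \<Rightarrow> 'm" where
  "T u v x y z = x + s (bil q v y) u - s (bil q u y) v - s (q v * bil q u z) u"

lemma T000[simp]: "T u v 0 0 0 = 0"
  by (simp add: T_def)

lemma L1: "coeff (esd (scaleX s) (qX q) [:u:] (monom v k) p) n = T u v (coeff p n) (shc p k n) (shc p (2 * k) n)"
proof -
  have a: "shc (bil (qX q) [:u:] p) k n = bil q u (shc p k n)"
    by (simp add: shc_def c1)
  have b: "coeff (monom (q v) (2 * k) * bil (qX q) [:u:] p) n = q v * bil q u (shc p (2 * k) n)"
    by (simp add: coeff_monom_mult shc_def c1)
  show ?thesis
    unfolding esd_def T_def by (simp add: c2 c3 c4 c5 a b)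
qed

lemma L1sh: "shc (esd (scaleX s) (qX q) [:u:] (monom v k) p) j n = T u v (shc p j n) (shc p (j + k) n) (shc p (j + 2 * k) n)"
proof (cases "j \<le> n")
  case True
  have "\<And>i. shc p i (n - j) = shc p (j + i) n" using True by (auto simp: shc_def diff_diff_add)
  with True show ?thesis by (simp add: shc_def L1)
next
  case False
  then show ?thesis by (simp add: shc_def)
qed

lemma scale_two: "s (c * (2 * a)) x = s (c * a) x + s (c * a) x"
proof -
  have "c * (2 * a) = c * a + c * a" by (simp add: algebra_simps mult_2)
  then show ?thesis by (metis scale_left_distrib)
qed

lemma Tinv:
  assumes "q u = 0" "bil q u v = 0"
  shows "T u v (T u (-v) x y z) (T u (-v) y z w) (T u (-v) z w w') = x"
proof -
  have uu: "bil q u u = 0" using assms bil_self by simp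
  have vu: "bil q v u = 0" using assms bil_sym by metis
  have e1: "bil q u (T u (-v) z w w') = bil q u z"
    by (simp add: T_def bil_add2 bil_diff2 bil_smul2 bil_minus2 uu assms)
  have e2: "bil q v (T u (-v) y z w) = bil q v y + 2 * q v * bil q u z"
    by (simp add: T_def bil_add2 bil_diff2 bil_smul2 bil_minus2 bil_minus1 vu bil_self q_minus)
  have e3: "bil q u (T u (-v) y z w) = bil q u y"
    by (simp add: T_def bil_add2 bil_diff2 bil_smul2 bil_minus2 uu assms)
  show ?thesis
    unfolding T_def[of u v] e1 e2 e3
    by (simp add: T_def q_minus bil_minus1 algebra_simps scale_two)
qed


abbreviation sig where "sig u v k \<equiv> esd (scaleX s) (qX q) [:u:] (monom v k)"

lemma sig_inv_l:
  assumes "q u = 0" "bil q u v = 0"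
  shows "sig u v k (sig u (-v) k p) = p"
proof (rule poly_eqI)
  fix n
  have k2: "k + k = 2 * k" "k + 2 * k = 2 * k + k" by auto
  show "coeff (sig u v k (sig u (-v) k p)) n = coeff p n"
    unfolding L1 L1sh L1[of u "-v"] k2 using Tinv[OF assms] by simp
qed

lemma sig_inv_r:
  assumes "q u = 0" "bil q u v = 0"
  shows "sig u (-v) k (sig u v k p) = p"
proof -
  have "bil q u (-v) = 0" using assms by (simp add: bil_minus2)
  from sig_inv_l[OF assms(1) this] show ?thesis by simp
qed

lemma sig_bij:
  assumes "q u = 0" "bil q u v = 0"
  shows "bij (sig u v k)" "inv (sig u v k) = sig u (-v) k"
proof -
  have a: "sig u v k \<circ> sig u (-v) k = id" "sig u (-v) k \<circ> sig u v k = id"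
    using sig_inv_l[OF assms] sig_inv_r[OF assms] by auto
  show "bij (sig u v k)" using a by (metis o_bij)
  show "inv (sig u v k) = sig u (-v) k" using a by (rule inv_unique_comp)
qed

lemma evalM_bound: "degree p < N \<Longrightarrow> evalM s c p = (\<Sum>i<N. s (c ^ i) (coeff p i))"
  unfolding evalM_def by (rule sum.mono_neutral_left) (auto simp: coeff_eq_0)

lemma sum_shc:
  assumes "degree p + j < N"
  shows "(\<Sum>n<N. s (c ^ n) (shc p j n)) = s (c ^ j) (evalM s c p)"
proof -
  have "(\<Sum>n<N. s (c ^ n) (shc p j n)) = (\<Sum>n\<in>{j..<N}. s (c ^ n) (shc p j n))"
    by (rule sum.mono_neutral_right) (auto simp: shc_def)
  also have "\<dots> = (\<Sum>m<N - j. s (c ^ (m + j)) (coeff p m))"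
    by (rule sum.reindex_bij_witness[where i="\<lambda>m. m + j" and j="\<lambda>n. n - j"]) (auto simp: shc_def)
  also have "\<dots> = s (c ^ j) (\<Sum>m<N - j. s (c ^ m) (coeff p m))"
    by (simp add: scale_sum_right power_add mult.commute)
  also have "(\<Sum>m<N - j. s (c ^ m) (coeff p m)) = evalM s c p"
    using assms by (intro evalM_bound[symmetric]) auto
  finally show ?thesis .
qed

lemma sT: "s a (T u v x y z) = s a x + s (bil q v (s a y)) u - s (bil q u (s a y)) v - s (q v * bil q u (s a z)) u"
  by (simp add: T_def scale_right_distrib scale_right_diff_distrib bil_smul2 ac_simps)

lemma pull1: "(\<Sum>n\<in>A. s (bil q v (W n)) u) = s (bil q v (sum W A)) u"
  by (simp add: bil_sum2 scale_sum_left)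
lemma pull2: "(\<Sum>n\<in>A. s (r * bil q v (W n)) u) = s (r * bil q v (sum W A)) u"
  by (simp add: bil_sum2 scale_sum_left sum_distrib_left)

lemma evalM_sig: "evalM s c (sig u v k p) = esd s q u (s (c ^ k) v) (evalM s c p)"
proof -
  define N where "N = Suc (degree (sig u v k p) + degree p + 2 * k)"
  have "evalM s c (sig u v k p) = (\<Sum>n<N. s (c ^ n) (T u v (coeff p n) (shc p k n) (shc p (2 * k) n)))"
    by (subst evalM_bound[of _ N]) (auto simp: N_def L1)
  also have "\<dots> = (\<Sum>n<N. s (c ^ n) (coeff p n)) + s (bil q v (\<Sum>n<N. s (c ^ n) (shc p k n))) u
      - s (bil q u (\<Sum>n<N. s (c ^ n) (shc p k n))) v - s (q v * bil q u (\<Sum>n<N. s (c ^ n) (shc p (2 * k) n))) u"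
    by (simp add: sT sum.distrib sum_subtractf pull1 pull2)
  also have "\<dots> = evalM s c p + s (bil q v (s (c ^ k) (evalM s c p))) u
      - s (bil q u (s (c ^ k) (evalM s c p))) v - s (q v * bil q u (s (c ^ (2 * k)) (evalM s c p))) u"
  proof -
    have e0: "(\<Sum>n<N. s (c ^ n) (coeff p n)) = evalM s c p" by (rule evalM_bound[symmetric]) (simp add: N_def)
    have ek: "(\<Sum>n<N. s (c ^ n) (shc p k n)) = s (c ^ k) (evalM s c p)" by (rule sum_shc) (simp add: N_def)
    have e2k: "(\<Sum>n<N. s (c ^ n) (shc p (2 * k) n)) = s (c ^ (2 * k)) (evalM s c p)" by (rule sum_shc) (simp add: N_def)
    show ?thesis by (simp only: e0 ek e2k)
  qed
  also have "\<dots> = esd s q u (s (c ^ k) v) (evalM s c p)"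
  proof -
    have "c ^ (2 * k) = c ^ k * c ^ k" by (simp add: mult_2 power_add)
    then show ?thesis by (simp add: esd_def bil_smul1 bil_smul2 qhom ac_simps)
  qed
  finally show ?thesis .
qed


lemma evalM_const[simp]: "evalM s c [:x:] = x"
  by (simp add: evalM_def)

definition good :: "'a \<Rightarrow> ('m poly \<Rightarrow> 'm poly) \<Rightarrow> bool" where
  "good c \<beta> \<longleftrightarrow> bij \<beta> \<and> (\<forall>p. evalM s c (\<beta> p) = specialize s c \<beta> (evalM s c p))
     \<and> (\<forall>p. evalM s c (inv \<beta> p) = specialize s c (inv \<beta>) (evalM s c p))"

lemma comm_spec: "(\<And>p. evalM s c (\<beta> p) = \<gamma> (evalM s c p)) \<Longrightarrow> specialize s c \<beta> = \<gamma>"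
  unfolding specialize_def by (rule ext) (metis evalM_const)

lemma good_intro:
  assumes "bij \<beta>" "\<And>p. evalM s c (\<beta> p) = \<gamma> (evalM s c p)" "\<And>p. evalM s c (inv \<beta> p) = \<delta> (evalM s c p)"
  shows "good c \<beta>"
  using assms comm_spec[of c \<beta> \<gamma>] comm_spec[of c "inv \<beta>" \<delta>] unfolding good_def by metis

lemma good_spec:
  assumes "good c \<beta>"
  shows "bij (specialize s c \<beta>)" "specialize s c (inv \<beta>) = inv (specialize s c \<beta>)"
proof -
  let ?g = "specialize s c \<beta>" and ?d = "specialize s c (inv \<beta>)"
  have b: "bij \<beta>" and e1: "\<And>p. evalM s c (\<beta> p) = ?g (evalM s c p)"
    and e2: "\<And>p. evalM s c (inv \<beta> p) = ?d (evalM s c p)"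
    using assms unfolding good_def by auto
  have gd: "?g \<circ> ?d = id"
  proof
    fix x
    have "?g (?d (evalM s c [:x:])) = evalM s c (\<beta> (inv \<beta> [:x:]))" by (simp add: e1 e2)
    also have "\<dots> = x" using b by (simp add: bij_is_surj surj_f_inv_f)
    finally show "(?g \<circ> ?d) x = id x" by simp
  qed
  have dg: "?d \<circ> ?g = id"
  proof
    fix x
    have "?d (?g (evalM s c [:x:])) = evalM s c (inv \<beta> (\<beta> [:x:]))" by (simp add: e1 e2)
    also have "\<dots> = x" using b by (simp add: bij_is_inj inv_f_f)
    finally show "(?d \<circ> ?g) x = id x" by simp
  qed
  show "bij ?g" using gd dg by (metis o_bij)
  show "?d = inv ?g" using gd dg by (metis inv_unique_comp)
qed

lemma good_id: "good c id" "specialize s c id = id"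
proof -
  show "specialize s c id = id" by (rule comm_spec) simp
  then show "good c id" by (intro good_intro[where \<gamma>=id and \<delta>=id]) auto
qed

lemma good_comp:
  assumes "good c f" "good c g"
  shows "good c (f \<circ> g)" "specialize s c (f \<circ> g) = specialize s c f \<circ> specialize s c g"
proof -
  have bf: "bij f" and ef: "\<And>p. evalM s c (f p) = specialize s c f (evalM s c p)"
    and ef': "\<And>p. evalM s c (inv f p) = specialize s c (inv f) (evalM s c p)"
    using assms(1) unfolding good_def by auto
  have bg: "bij g" and eg: "\<And>p. evalM s c (g p) = specialize s c g (evalM s c p)"
    and eg': "\<And>p. evalM s c (inv g p) = specialize s c (inv g) (evalM s c p)"
    using assms(2) unfolding good_def by auto
  have e: "\<And>p. evalM s c ((f \<circ> g) p) = (specialize s c f \<circ> specialize s c g) (evalM s c p)"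
    by (simp add: ef eg)
  then show "specialize s c (f \<circ> g) = specialize s c f \<circ> specialize s c g" by (rule comm_spec)
  have "inv (f \<circ> g) = inv g \<circ> inv f" using bf bg by (simp add: o_inv_distrib)
  then have e': "\<And>p. evalM s c (inv (f \<circ> g) p) = (specialize s c (inv g) \<circ> specialize s c (inv f)) (evalM s c p)"
    by (simp add: ef' eg')
  show "good c (f \<circ> g)" using bf bg e e' by (intro good_intro) (auto intro: bij_comp)
qed

lemma good_inv:
  assumes "good c f"
  shows "good c (inv f)"
proof -
  have bf: "bij f" using assms unfolding good_def by auto
  then have "inv (inv f) = f" by (simp add: inv_inv_eq)
  moreover have "bij (inv f)" using bf by (rule bij_imp_bij_inv)
  ultimately show ?thesis using assms unfolding good_def by simp
qed

lemma good_sig: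
  assumes "q u = 0" "bil q u v = 0"
  shows "good c (sig u v k)" "specialize s c (sig u v k) = esd s q u (s (c ^ k) v)"
proof -
  show "specialize s c (sig u v k) = esd s q u (s (c ^ k) v)"
    by (rule comm_spec) (rule evalM_sig)
  show "good c (sig u v k)"
    using sig_bij[OF assms] by (intro good_intro) (auto simp: evalM_sig)
qed

lemma esd_zero: "esd s q u 0 = id"
  by (rule ext) (simp add: esd_def)

lemma lin_sum:
  assumes "lin_functional s \<phi>" shows "\<phi> (sum f A) = (\<Sum>i\<in>A. \<phi> (f i))"
proof -
  have add: "\<And>x y. \<phi> (x + y) = \<phi> x + \<phi> y" and sm: "\<And>a x. \<phi> (s a x) = a * \<phi> x"
    using assms unfolding lin_functional_def by auto
  have ph0: "\<phi> 0 = 0" using sm[of 0 0] by simp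
  show ?thesis by (induct A rule: infinite_finite_induct) (simp_all add: add ph0)
qed

lemma esd_pair_X:
  assumes "esd_pair s q u v"
  shows "esd_pair (scaleX s) (qX q) [:u:] (monom v k)"
proof -
  obtain \<phi> where lf: "lin_functional s \<phi>" and phu: "\<phi> u = 1" and qu: "q u = 0" and uv: "bil q u v = 0"
    using assms unfolding esd_pair_def unimodular_def by auto
  have add: "\<And>x y. \<phi> (x + y) = \<phi> x + \<phi> y" and sm: "\<And>a x. \<phi> (s a x) = a * \<phi> x"
    using lf unfolding lin_functional_def by auto
  have ph0: "\<phi> 0 = 0" using sm[of 0 0] by simp
  have cm: "\<And>p n. coeff (map_poly \<phi> p) n = \<phi> (coeff p n)" using ph0 by (simp add: coeff_map_poly)
  have "lin_functional (scaleX s) (map_poly \<phi>)"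
    unfolding lin_functional_def
  proof (intro conjI allI)
    fix x y show "map_poly \<phi> (x + y) = map_poly \<phi> x + map_poly \<phi> y"
      by (rule poly_eqI) (simp add: cm add)
  next
    fix a x show "map_poly \<phi> (scaleX s a x) = a * map_poly \<phi> x"
      by (rule poly_eqI) (simp add: cm coeff_scaleX coeff_mult lin_sum[OF lf] sm)
  qed
  moreover have "map_poly \<phi> [:u:] = [:1:]"
    by (rule poly_eqI) (simp add: cm coeff_pCons0_eq phu ph0)
  then have "map_poly \<phi> [:u:] = 1" by (simp add: one_pCons)
  ultimately have "unimodular (scaleX s) [:u:]" unfolding unimodular_def by blast
  moreover have "bil (qX q) [:u:] (monom v k) = 0"
    by (rule poly_eqI) (simp add: c1 coeff_monom uv)
  ultimately show ?thesis unfolding esd_pair_def using c6[OF qu] by simp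
qed

lemma monom_ideal:
  assumes "v \<in> ideal_submod s I" "ring_ideal I"
  shows "monom v 1 \<in> ideal_submod (scaleX s) (ideal_poly I)"
  using assms(1)
proof induct
  case ideal_submod_zero
  then show ?case by (simp add: ideal_submod.ideal_submod_zero)
next
  case (ideal_submod_smult a x)
  have "monom (s a x) 1 = scaleX s [:a:] (monom x 1)"
    by (rule poly_eqI) (auto simp: c5 shc_def coeff_monom coeff_pCons0_eq)
  moreover have "[:a:] \<in> ideal_poly I"
    using ideal_submod_smult assms(2) unfolding ideal_poly_def ring_ideal_def by (auto simp: coeff_pCons0_eq)
  ultimately show ?case by (metis ideal_submod.ideal_submod_smult)
next
  case (ideal_submod_add x y)
  then show ?case by (metis add_monom ideal_submod.ideal_submod_add)
qed


lemma TransO_lift: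
  "\<tau> \<in> TransO s q \<Longrightarrow> \<exists>\<tau>' \<in> TransO (scaleX s) (qX q). \<forall>c. good c \<tau>' \<and> specialize s c \<tau>' = \<tau>"
proof (induct rule: TransO.induct)
  case TransO_id
  show ?case using good_id TransO.TransO_id by blast
next
  case (TransO_gen u v)
  then have qu: "q u = 0" and uv: "bil q u v = 0" unfolding esd_pair_def by auto
  show ?case
    using good_sig[OF qu uv, of _ 0] esd_pair_X[OF TransO_gen, of 0]
    by (intro bexI[of _ "sig u v 0"]) (auto intro: TransO.TransO_gen)
next
  case (TransO_comp f g)
  then obtain f' g' where f': "f' \<in> TransO (scaleX s) (qX q)" "\<forall>c. good c f' \<and> specialize s c f' = f"
    and g': "g' \<in> TransO (scaleX s) (qX q)" "\<forall>c. good c g' \<and> specialize s c g' = g" by blast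
  have "\<forall>c. good c (f' \<circ> g') \<and> specialize s c (f' \<circ> g') = f \<circ> g"
    using f'(2) g'(2) good_comp by metis
  then show ?case using TransO.TransO_comp[OF f'(1) g'(1)] by blast
next
  case (TransO_inv f)
  then obtain f' where f': "f' \<in> TransO (scaleX s) (qX q)" "\<forall>c. good c f' \<and> specialize s c f' = f" by blast
  show ?case using f' good_inv good_spec
    by (intro bexI[of _ "inv f'"]) (auto intro: TransO.TransO_inv)
qed

lemma TransO_rel_lift:
  assumes "\<alpha> \<in> TransO_rel s q I" "ring_ideal I"
  shows "\<exists>\<beta> \<in> TransO_rel (scaleX s) (qX q) (ideal_poly I).
    good 0 \<beta> \<and> good 1 \<beta> \<and> specialize s 1 \<beta> = \<alpha> \<and> specialize s 0 \<beta> = id"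
  using assms(1)
proof (induct rule: TransO_rel.induct)
  case TransO_rel_id
  show ?case using good_id TransO_rel.TransO_rel_id by blast
next
  case (TransO_rel_gen u v)
  then have qu: "q u = 0" and uv: "bil q u v = 0" unfolding esd_pair_def by auto
  have mem: "sig u v 1 \<in> TransO_rel (scaleX s) (qX q) (ideal_poly I)"
    using esd_pair_X[OF TransO_rel_gen(1), of 1] monom_ideal[OF TransO_rel_gen(2) assms(2)]
    by (rule TransO_rel.TransO_rel_gen)
  show ?case
    using good_sig[OF qu uv, of _ 1] esd_zero
    by (intro bexI[OF _ mem]) auto
next
  case (TransO_rel_conj \<tau> f)
  obtain \<tau>' where t: "\<tau>' \<in> TransO (scaleX s) (qX q)" "\<And>c. good c \<tau>'" "\<And>c. specialize s c \<tau>' = \<tau>"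
    using TransO_lift[OF TransO_rel_conj(1)] by blast
  obtain \<beta> where b: "\<beta> \<in> TransO_rel (scaleX s) (qX q) (ideal_poly I)" "good 0 \<beta>" "good 1 \<beta>"
    "specialize s 1 \<beta> = f" "specialize s 0 \<beta> = id" using TransO_rel_conj(3) by blast
  have bt: "bij \<tau>" using good_spec(1)[OF t(2)[of 0]] t(3) by simp
  have it: "\<And>c. specialize s c (inv \<tau>') = inv \<tau>" using good_spec(2)[OF t(2)] t(3) by simp
  have g: "\<And>c. good c \<beta> \<Longrightarrow> good c (\<tau>' \<circ> \<beta> \<circ> inv \<tau>') \<and>
      specialize s c (\<tau>' \<circ> \<beta> \<circ> inv \<tau>') = \<tau> \<circ> specialize s c \<beta> \<circ> inv \<tau>"
    using good_comp good_inv t(2) t(3) it by metis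
  have "\<tau> \<circ> id \<circ> inv \<tau> = id" using bt by (intro ext) (simp add: bij_is_surj surj_f_inv_f)
  then have "good 0 (\<tau>' \<circ> \<beta> \<circ> inv \<tau>') \<and> good 1 (\<tau>' \<circ> \<beta> \<circ> inv \<tau>') \<and>
      specialize s 1 (\<tau>' \<circ> \<beta> \<circ> inv \<tau>') = \<tau> \<circ> f \<circ> inv \<tau> \<and> specialize s 0 (\<tau>' \<circ> \<beta> \<circ> inv \<tau>') = id"
    using g[OF b(2)] g[OF b(3)] b(4,5) by simp
  then show ?case using TransO_rel.TransO_rel_conj[OF t(1) b(1)] by blast
next
  case (TransO_rel_comp f g)
  then obtain f' g' where f': "f' \<in> TransO_rel (scaleX s) (qX q) (ideal_poly I)" "good 0 f'" "good 1 f'"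
    "specialize s 1 f' = f" "specialize s 0 f' = id"
    and g': "g' \<in> TransO_rel (scaleX s) (qX q) (ideal_poly I)" "good 0 g'" "good 1 g'"
    "specialize s 1 g' = g" "specialize s 0 g' = id" by blast
  have "good 0 (f' \<circ> g') \<and> good 1 (f' \<circ> g') \<and> specialize s 1 (f' \<circ> g') = f \<circ> g \<and> specialize s 0 (f' \<circ> g') = id"
    using f' g' good_comp by (metis comp_id)
  then show ?case using TransO_rel.TransO_rel_comp[OF f'(1) g'(1)] by blast
next
  case (TransO_rel_inv f)
  then obtain f' where f': "f' \<in> TransO_rel (scaleX s) (qX q) (ideal_poly I)" "good 0 f'" "good 1 f'"
    "specialize s 1 f' = f" "specialize s 0 f' = id" by blast
  show ?case using f' good_inv good_spec
    by (intro bexI[of _ "inv f'"]) (auto intro: TransO_rel.TransO_rel_inv)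
qed

end

theorem mainTheorem17:
  fixes s :: "'a::comm_ring_1 \<Rightarrow> 'm::ab_group_add \<Rightarrow> 'm"
    and q :: "'m \<Rightarrow> 'a"
    and I :: "'a set"
    and \<alpha> :: "'m \<Rightarrow> 'm"
  assumes "\<exists>h::'a. 2 * h = 1"
    and "ring_ideal I"
    and "quadratic_space s q"
    and "\<alpha> \<in> TransO_rel s q I"
  shows "\<exists>\<beta> \<in> TransO_rel (scaleX s) (qX q) (ideal_poly I).
           specialize s 1 \<beta> = \<alpha> \<and> specialize s 0 \<beta> = id"
proof -
  obtain h :: 'a where h: "2 * h = 1" using assms(1) by blast
  interpret qsp s q h
    using assms(3) h unfolding quadratic_space_def qsp_def qsp_axioms_def by auto
  show ?thesis using TransO_rel_lift[OF assms(4,2)] by blast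
qed

end
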